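(* If $A$ is a principal ideal domain and $I$ is an ideal of $A$, then the quotient ring $A/I$ is a BL-ring.
   Context: For a commutative unitary ring $R$, its ideals $Id(R)$ form a residuated lattice $(Id(R),\cap,+,\otimes,\rightarrow,\{0\},R)$, ordered by inclusion, where $I+J$ is the ideal sum, $I\otimes J$ the ideal product, and $I\rightarrow J=(J:I)=\{x\in R: xI\subseteq J\}$. A BL-algebra is a residuated lattice satisfying prelinearity $(x\rightarrow y)\vee(y\rightarrow x)=1$ and divisibility $x\odot(x\rightarrow y)=x\wedge y$. A BL-ring is a commutative unitary ring whose lattice of ideals, with this structure, is a BL-algebra. *)

theory Defs
  imports "HOL-Algebra.Ideal_Product" "HOL-Algebra.QuotRing" "HOL-Algebra.Ring_Divisibility"
begin

definition ideal_residuum :: "('a, 'b) ring_scheme \<Rightarrow> 'a set \<Rightarrow> 'a set \<Rightarrow> 'a set" where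
  "ideal_residuum R I J = {x \<in> carrier R. \<forall>i \<in> I. x \<otimes>\<^bsub>R\<^esub> i \<in> J}"

definition ideals_residuated_lattice :: "('a, 'b) ring_scheme \<Rightarrow> bool" where
  "ideals_residuated_lattice R \<longleftrightarrow>
     ideal {\<zero>\<^bsub>R\<^esub>} R \<and> ideal (carrier R) R \<and>
     (\<forall>I. ideal I R \<longrightarrow> {\<zero>\<^bsub>R\<^esub>} \<subseteq> I \<and> I \<subseteq> carrier R) \<and>
     (\<forall>I J. ideal I R \<longrightarrow> ideal J R \<longrightarrow>
        ideal (I \<inter> J) R \<and> ideal (I <+>\<^bsub>R\<^esub> J) R \<and> ideal (I \<cdot>\<^bsub>R\<^esub> J) R \<and>
        ideal (ideal_residuum R I J) R \<and>
        I \<subseteq> I <+>\<^bsub>R\<^esub> J \<and> J \<subseteq> I <+>\<^bsub>R\<^esub> J \<and>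
        (\<forall>K. ideal K R \<longrightarrow> I \<subseteq> K \<longrightarrow> J \<subseteq> K \<longrightarrow> I <+>\<^bsub>R\<^esub> J \<subseteq> K) \<and>
        I \<cdot>\<^bsub>R\<^esub> J = J \<cdot>\<^bsub>R\<^esub> I \<and> I \<cdot>\<^bsub>R\<^esub> carrier R = I) \<and>
     (\<forall>I J K. ideal I R \<longrightarrow> ideal J R \<longrightarrow> ideal K R \<longrightarrow>
        (I \<cdot>\<^bsub>R\<^esub> J) \<cdot>\<^bsub>R\<^esub> K = I \<cdot>\<^bsub>R\<^esub> (J \<cdot>\<^bsub>R\<^esub> K) \<and>
        (I \<cdot>\<^bsub>R\<^esub> J \<subseteq> K \<longleftrightarrow> I \<subseteq> ideal_residuum R J K))"

text \<open>A BL-ring: a commutative unitary ring whose ideal lattice is a BL-algebra,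
  i.e. a residuated lattice satisfying prelinearity and divisibility.\<close>
definition BL_ring :: "('a, 'b) ring_scheme \<Rightarrow> bool" where
  "BL_ring R \<longleftrightarrow> cring R \<and> ideals_residuated_lattice R \<and>
     (\<forall>I J. ideal I R \<longrightarrow> ideal J R \<longrightarrow>
        ideal_residuum R I J <+>\<^bsub>R\<^esub> ideal_residuum R J I = carrier R \<and>
        I \<cdot>\<^bsub>R\<^esub> ideal_residuum R I J = I \<inter> J)"

end

theory Submission
  imports Defs
begin

lemma (in cring) res_ideal:
  assumes "ideal I R" "ideal J R" shows "ideal (ideal_residuum R I J) R"
proof (rule idealI)
  show "ring R" by (rule ring_axioms)
  show "subgroup (ideal_residuum R I J) (add_monoid R)"
  proof (rule add.subgroupI)
    show "ideal_residuum R I J \<subseteq> carrier R" by (auto simp: ideal_residuum_def)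
    show "ideal_residuum R I J \<noteq> {}" unfolding ideal_residuum_def
      using assms by (auto intro!: exI[of _ \<zero>] simp: ideal.Icarr additive_subgroup.zero_closed ideal.axioms(1))
  next
    fix a assume a: "a \<in> ideal_residuum R I J"
    show "\<ominus> a \<in> ideal_residuum R I J"
      using a assms unfolding ideal_residuum_def
      by (auto simp: l_minus ideal.Icarr additive_subgroup.a_inv_closed ideal.axioms(1))
  next
    fix a b assume a: "a \<in> ideal_residuum R I J" and b: "b \<in> ideal_residuum R I J"
    show "a \<oplus> b \<in> ideal_residuum R I J"
      using a b assms unfolding ideal_residuum_def
      by (auto simp: l_distr ideal.Icarr additive_subgroup.a_closed ideal.axioms(1))
  qed
next
  fix a x assume a: "a \<in> ideal_residuum R I J" and x: "x \<in> carrier R"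
  show "x \<otimes> a \<in> ideal_residuum R I J"
    using a x assms unfolding ideal_residuum_def
    by (auto simp: m_assoc ideal.Icarr ideal.I_l_closed)
  show "a \<otimes> x \<in> ideal_residuum R I J"
  proof -
    have "(a \<otimes> x) \<otimes> i = x \<otimes> (a \<otimes> i)" if "i \<in> carrier R" "a \<in> carrier R" for i
      using that x by (simp add: m_assoc m_lcomm m_comm)
    thus ?thesis using a x assms unfolding ideal_residuum_def
      by (auto simp: ideal.Icarr ideal.I_l_closed)
  qed
qed

lemma (in cring) residuation:
  assumes "ideal I R" "ideal J R" "ideal K R"
  shows "I \<cdot> J \<subseteq> K \<longleftrightarrow> I \<subseteq> ideal_residuum R J K"
proof
  assume h: "I \<cdot> J \<subseteq> K"
  show "I \<subseteq> ideal_residuum R J K"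
    unfolding ideal_residuum_def using h assms ideal_prod.prod[of _ I _ J R]
    by (auto simp: ideal.Icarr)
next
  assume h: "I \<subseteq> ideal_residuum R J K"
  show "I \<cdot> J \<subseteq> K"
  proof
    fix s assume "s \<in> I \<cdot> J" thus "s \<in> K"
      by (induct s rule: ideal_prod.induct)
         (use h assms in \<open>auto simp: ideal_residuum_def additive_subgroup.a_closed ideal.axioms(1)\<close>)
  qed
qed

lemma (in ring) set_add_sub1: assumes "ideal I R" "ideal J R" shows "I \<subseteq> I <+> J"
proof
  fix i assume "i \<in> I"
  hence "i = i \<oplus> \<zero>" using assms by (simp add: ideal.Icarr)
  moreover have "\<zero> \<in> J" using assms by (simp add: additive_subgroup.zero_closed ideal.axioms(1))
  ultimately show "i \<in> I <+> J" using \<open>i \<in> I\<close> unfolding set_add_def'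
    by (intro UN_I[of i] UN_I[of \<zero>]) auto
qed

lemma (in ring) set_add_sub2: assumes "ideal I R" "ideal J R" shows "J \<subseteq> I <+> J"
  using set_add_sub1[OF assms(2,1)] set_add_comm assms by (metis ideal.axioms(1) additive_subgroup.a_subset)

lemma (in ring) set_add_min: assumes "ideal I R" "ideal J R" "ideal K R" "I \<subseteq> K" "J \<subseteq> K"
  shows "I <+>\<^bsub>R\<^esub> J \<subseteq> K"
  using assms unfolding set_add_def' by (auto intro!: additive_subgroup.a_closed[OF ideal.axioms(1)])

lemma (in cring) ideals_rl: "ideals_residuated_lattice R"
  unfolding ideals_residuated_lattice_def
  apply (intro conjI allI impI)
  apply (simp_all add: zeroideal oneideal additive_subgroup.zero_closed ideal.axioms(1) ideal.Icarr subsetI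
     i_intersect add_ideals ideal_prod_is_ideal res_ideal set_add_sub1 set_add_sub2 set_add_min
     ideal_prod_one ideal_prod_assoc residuation)
  apply (rule ideal_prod_commute; assumption)
  done


lemma (in principal_domain) prelin_pid:
  assumes P: "ideal P R" and Q: "ideal Q R"
  shows "\<exists>u v. u \<in> ideal_residuum R P Q \<and> v \<in> ideal_residuum R Q P \<and> u \<oplus> v = \<one>"
proof -
  obtain a where a: "a \<in> carrier R" "P = PIdl a" using exists_gen[OF P] by blast
  obtain b where b: "b \<in> carrier R" "Q = PIdl b" using exists_gen[OF Q] by blast
  obtain d where d: "d \<in> carrier R" "P <+>\<^bsub>R\<^esub> Q = PIdl d" using exists_gen[OF add_ideals[OF P Q]] by blast
  have "a \<in> PIdl d" using d a set_add_sub1[OF P Q] cgenideal_self[of a] by blast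
  then obtain a' where a': "a' \<in> carrier R" "a = a' \<otimes> d" unfolding cgenideal_def by blast
  have "b \<in> PIdl d" using d b set_add_sub2[OF P Q] cgenideal_self[of b] by blast
  then obtain b' where b': "b' \<in> carrier R" "b = b' \<otimes> d" unfolding cgenideal_def by blast
  have "d \<in> P <+>\<^bsub>R\<^esub> Q" using d cgenideal_self[of d] by blast
  then obtain s t where st: "s \<in> P" "t \<in> Q" "d = s \<oplus> t" unfolding set_add_def' by blast
  then obtain x y where xy: "x \<in> carrier R" "y \<in> carrier R" "s = x \<otimes> a" "t = y \<otimes> b"
    using a b unfolding cgenideal_def by blast
  have z0: "\<zero> \<in> ideal_residuum R I J" if "ideal J R" "ideal I R" for I J
    unfolding ideal_residuum_def using that by (auto simp: ideal.Icarr additive_subgroup.zero_closed ideal.axioms(1))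
  show ?thesis
  proof (cases "d = \<zero>")
    case True
    hence "a = \<zero>" "b = \<zero>" using a' b' by auto
    moreover have "PIdl \<zero> = {\<zero>}" unfolding cgenideal_def
      by (auto intro!: exI[of _ \<zero>])
    ultimately have "P = {\<zero>}" "Q = {\<zero>}" using a b by auto
    hence "\<one> \<in> ideal_residuum R P Q" unfolding ideal_residuum_def by auto
    thus ?thesis using z0[OF P Q] by (intro exI[of _ \<one>] exI[of _ \<zero>]) auto
  next
    case False
    have "(x \<otimes> a' \<oplus> y \<otimes> b') \<otimes> d = x \<otimes> (a' \<otimes> d) \<oplus> y \<otimes> (b' \<otimes> d)"
      using xy(1,2) a'(1) b'(1) d(1) by (simp add: l_distr m_assoc)
    also have "\<dots> = x \<otimes> a \<oplus> y \<otimes> b" by (simp only: a'(2)[symmetric] b'(2)[symmetric])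
    also have "\<dots> = d" by (simp only: st(3) xy(3,4))
    finally have "\<one> \<otimes> d = (x \<otimes> a' \<oplus> y \<otimes> b') \<otimes> d" using d(1) by simp
    hence one: "\<one> = x \<otimes> a' \<oplus> y \<otimes> b'"
      using m_rcancel[OF False d(1)] xy a' b' by simp
    have u: "y \<otimes> b' \<in> ideal_residuum R P Q"
      unfolding ideal_residuum_def
    proof (safe)
      show "y \<otimes> b' \<in> carrier R" using xy b' by simp
      fix i assume "i \<in> P"
      then obtain r where r: "r \<in> carrier R" "i = r \<otimes> a" using a unfolding cgenideal_def by blast
      have "y \<otimes> b' \<otimes> i = (y \<otimes> r \<otimes> a') \<otimes> b" using r a' b' xy d(1) by (simp add: m_ac)
      thus "y \<otimes> b' \<otimes> i \<in> Q" using b r a' xy unfolding cgenideal_def by auto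
    qed
    have v: "x \<otimes> a' \<in> ideal_residuum R Q P"
      unfolding ideal_residuum_def
    proof (safe)
      show "x \<otimes> a' \<in> carrier R" using xy a' by simp
      fix i assume "i \<in> Q"
      then obtain r where r: "r \<in> carrier R" "i = r \<otimes> b" using b unfolding cgenideal_def by blast
      have "x \<otimes> a' \<otimes> i = (x \<otimes> r \<otimes> b') \<otimes> a" using r a' b' xy d(1) by (simp add: m_ac)
      thus "x \<otimes> a' \<otimes> i \<in> P" using a r b' xy unfolding cgenideal_def by auto
    qed
    show ?thesis using u v one xy a' b' by (intro exI[of _ "y \<otimes> b'"] exI[of _ "x \<otimes> a'"]) (auto simp: a_comm)
  qed
qed

lemma (in principal_domain) div_pid:
  assumes P: "ideal P R" and Q: "ideal Q R" and z: "z \<in> P" "z \<in> Q"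
  shows "\<exists>p w. p \<in> P \<and> w \<in> ideal_residuum R P Q \<and> z = p \<otimes> w"
proof -
  obtain a where a: "a \<in> carrier R" "P = PIdl a" using exists_gen[OF P] by blast
  obtain r where r: "r \<in> carrier R" "z = r \<otimes> a" using z a unfolding cgenideal_def by blast
  have "r \<in> ideal_residuum R P Q" unfolding ideal_residuum_def
  proof safe
    fix i assume "i \<in> P"
    then obtain c where c: "c \<in> carrier R" "i = c \<otimes> a" using a unfolding cgenideal_def by blast
    have "r \<otimes> i = c \<otimes> z" using c r a by (simp add: m_lcomm)
    thus "r \<otimes> i \<in> Q" using z c Q by (simp add: ideal.I_l_closed)
  qed (use r in auto)
  thus ?thesis using a r cgenideal_self[of a] by (intro exI[of _ a] exI[of _ r]) (auto simp: m_comm)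
qed

theorem corollary3p8:
  fixes A :: "('a, 'b) ring_scheme" and I :: "'a set"
  assumes "principal_domain A" and "ideal I A"
  shows "BL_ring (A Quot I)"
proof -
  interpret A: principal_domain A by fact
  interpret I: ideal I A by fact
  define R where "R = A Quot I"
  interpret R: cring R unfolding R_def by (rule I.quotient_is_cring[OF A.is_cring])
  define \<pi> where "\<pi> = (+>\<^bsub>A\<^esub>) I"
  have hom: "\<pi> \<in> ring_hom A R" unfolding \<pi>_def R_def by (rule I.rcos_ring_hom)
  have homr: "ring_hom_ring A R \<pi>" unfolding \<pi>_def R_def by (rule I.rcos_ring_hom_ring)
  have surj: "\<exists>x\<in>carrier A. C = \<pi> x" if "C \<in> carrier R" for C
    using that unfolding R_def \<pi>_def FactRing_def using A_RCOSETS_def'[of A I] by auto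
  have pcarr: "\<pi> x \<in> carrier R" if "x \<in> carrier A" for x using hom that by (rule ring_hom_closed)
  have pmult: "\<pi> (x \<otimes>\<^bsub>A\<^esub> y) = \<pi> x \<otimes>\<^bsub>R\<^esub> \<pi> y" if "x \<in> carrier A" "y \<in> carrier A" for x y
    using hom that by (rule ring_hom_mult)
  have padd: "\<pi> (x \<oplus>\<^bsub>A\<^esub> y) = \<pi> x \<oplus>\<^bsub>R\<^esub> \<pi> y" if "x \<in> carrier A" "y \<in> carrier A" for x y
    using hom that by (rule ring_hom_add)
  have pone: "\<pi> \<one>\<^bsub>A\<^esub> = \<one>\<^bsub>R\<^esub>" using hom by (rule ring_hom_one)
  define V where "V J = {x \<in> carrier A. \<pi> x \<in> J}" for J
  have Videal: "ideal (V J) A" if "ideal J R" for J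
    unfolding V_def using ring_hom_ring.ideal_vimage[OF homr that] .
  have lift: "\<pi> w \<in> ideal_residuum R J K"
    if J: "ideal J R" and K: "ideal K R" and w: "w \<in> ideal_residuum A (V J) (V K)" for J K w
    unfolding ideal_residuum_def
  proof safe
    have wc: "w \<in> carrier A" using w unfolding ideal_residuum_def by auto
    thus "\<pi> w \<in> carrier R" by (rule pcarr)
    fix C assume "C \<in> J"
    then obtain x where x: "x \<in> carrier A" "C = \<pi> x" using surj ideal.Icarr[OF J] by blast
    hence "x \<in> V J" using \<open>C \<in> J\<close> unfolding V_def by auto
    hence "w \<otimes>\<^bsub>A\<^esub> x \<in> V K" using w unfolding ideal_residuum_def by auto
    thus "\<pi> w \<otimes>\<^bsub>R\<^esub> C \<in> K" unfolding V_def using pmult wc x by auto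
  qed
  have prelin: "ideal_residuum R J K <+>\<^bsub>R\<^esub> ideal_residuum R K J = carrier R"
    if J: "ideal J R" and K: "ideal K R" for J K
  proof -
    obtain u v where uv: "u \<in> ideal_residuum A (V J) (V K)" "v \<in> ideal_residuum A (V K) (V J)"
      "u \<oplus>\<^bsub>A\<^esub> v = \<one>\<^bsub>A\<^esub>"
      using A.prelin_pid[OF Videal[OF J] Videal[OF K]] by blast
    have "u \<in> carrier A" "v \<in> carrier A" using uv unfolding ideal_residuum_def by auto
    hence "\<one>\<^bsub>R\<^esub> = \<pi> u \<oplus>\<^bsub>R\<^esub> \<pi> v" using padd uv(3) pone by metis
    hence "\<one>\<^bsub>R\<^esub> \<in> ideal_residuum R J K <+>\<^bsub>R\<^esub> ideal_residuum R K J"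
      using lift[OF J K uv(1)] lift[OF K J uv(2)] unfolding set_add_def' by blast
    moreover have "ideal (ideal_residuum R J K <+>\<^bsub>R\<^esub> ideal_residuum R K J) R"
      by (rule R.add_ideals; rule R.res_ideal; fact)
    ultimately show ?thesis using ideal.one_imp_carrier by blast
  qed
  have divis: "J \<cdot>\<^bsub>R\<^esub> ideal_residuum R J K = J \<inter> K"
    if J: "ideal J R" and K: "ideal K R" for J K
  proof
    have res: "ideal (ideal_residuum R J K) R" using R.res_ideal[OF J K] .
    have "J \<cdot>\<^bsub>R\<^esub> ideal_residuum R J K = ideal_residuum R J K \<cdot>\<^bsub>R\<^esub> J"
      using R.ideal_prod_commute[OF J res] .
    also have "\<dots> \<subseteq> K" using R.residuation[OF res J K] by simp
    finally show "J \<cdot>\<^bsub>R\<^esub> ideal_residuum R J K \<subseteq> J \<inter> K"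
      using R.ideal_prod_inter[OF J res] by blast
  next
    show "J \<inter> K \<subseteq> J \<cdot>\<^bsub>R\<^esub> ideal_residuum R J K"
    proof
      fix C assume C: "C \<in> J \<inter> K"
      then obtain z where z: "z \<in> carrier A" "C = \<pi> z" using surj ideal.Icarr[OF J] by blast
      hence "z \<in> V J" "z \<in> V K" using C unfolding V_def by auto
      then obtain p w where pw: "p \<in> V J" "w \<in> ideal_residuum A (V J) (V K)" "z = p \<otimes>\<^bsub>A\<^esub> w"
        using A.div_pid[OF Videal[OF J] Videal[OF K]] by blast
      have "p \<in> carrier A" "w \<in> carrier A" using pw unfolding V_def ideal_residuum_def by auto
      hence "C = \<pi> p \<otimes>\<^bsub>R\<^esub> \<pi> w" using z pw pmult by auto
      moreover have "\<pi> p \<in> J" using pw unfolding V_def by auto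
      ultimately show "C \<in> J \<cdot>\<^bsub>R\<^esub> ideal_residuum R J K"
        using ideal_prod.prod[OF _ lift[OF J K pw(2)]] by auto
    qed
  qed
  have "BL_ring R" unfolding BL_ring_def
    using R.is_cring R.ideals_rl prelin divis by blast
  thus ?thesis unfolding R_def .
qed
end
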